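(* Let $A_1,\ldots,A_n$ be events in a probability space, let $X$ be the number of these events that occur, and for $1\le j\le n$ let $S_j=\sum_{1\le i_1<\cdots<i_j\le n}P(A_{i_1}\cdots A_{i_j})$ (with $S_j=0$ for $j>n$). Then for all integers $r\ge 1$ and $k\ge r$, $$P(X\ge r)=\sum_{j=r}^{k}(-1)^{r+j}\binom{j-1}{r-1}S_j+(-1)^{r+k+1}\sum_{i=1}^{r}\binom{k-i}{r-i}E\left[\binom{X-i}{k-i+1}\right].$$
   Context: Binomial convention: for integers $s,t$, $\binom{t}{s}=0$ if $\min(s,t)<0$ or $s>t$; otherwise $\binom{t}{s}=\frac{t!}{s!(t-s)!}$. $A_{i_1}\cdots A_{i_j}$ denotes the intersection of the events. *)

theory Defs
  imports "HOL-Probability.Probability"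
begin

definition ibinom :: "int \<Rightarrow> int \<Rightarrow> int" where
  "ibinom t s = (if min s t < 0 \<or> s > t then 0 else int (nat t choose nat s))"

definition count_events :: "(nat \<Rightarrow> 'a set) \<Rightarrow> nat \<Rightarrow> 'a \<Rightarrow> nat" where
  "count_events A n w = card {i \<in> {1..n}. w \<in> A i}"

definition S_sum :: "'a measure \<Rightarrow> (nat \<Rightarrow> 'a set) \<Rightarrow> nat \<Rightarrow> nat \<Rightarrow> real" where
  "S_sum M A n j = (\<Sum>I\<in>{I. I \<subseteq> {1..n} \<and> card I = j}. measure M (\<Inter>i\<in>I. A i))"

end

theory Submission imports Defs begin

lemma tele:
  fixes f g :: "nat \<Rightarrow> int"
  shows "(\<And>i. 1 \<le> i \<Longrightarrow> i \<le> m \<Longrightarrow> f i = g (i-1) - g i) \<Longrightarrow> (\<Sum>i=1..m. f i) = g 0 - g m"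
proof (induction m)
  case 0 then show ?case by simp
next
  case (Suc m)
  have "(\<Sum>i=1..Suc m. f i) = (\<Sum>i=1..m. f i) + f (Suc m)" by simp
  also have "(\<Sum>i=1..m. f i) = g 0 - g m" using Suc by auto
  also have "f (Suc m) = g m - g (Suc m)" using Suc.prems[of "Suc m"] by simp
  finally show ?case by simp
qed

lemma pw_base:
  fixes r x :: nat assumes "1 \<le> r" "r \<le> x"
  shows "(\<Sum>i=1..r. int ((x-i) choose (r-i+1))) = int (x choose r) - 1"
proof -
  have "(\<Sum>i=1..r. int ((x-i) choose (r-i+1))) = (\<lambda>i. int ((x-i) choose (r-i))) 0 - (\<lambda>i. int ((x-i) choose (r-i))) r"
  proof (rule tele)
    fix i assume i: "1 \<le> i" "i \<le> r"
    have a: "x - (i-1) = Suc (x-i)" "r - (i-1) = Suc (r-i)" using i assms by auto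
    show "int ((x-i) choose (r-i+1)) = int ((x-(i-1)) choose (r-(i-1))) - int ((x-i) choose (r-i))"
      unfolding a by simp
  qed
  then show ?thesis by simp
qed

lemma pw_step:
  fixes r k x :: nat assumes "1 \<le> r" "r \<le> k" "r \<le> x"
  shows "(\<Sum>i=1..r. int ((k-i) choose (r-i)) * int ((x-i) choose (k-i+1)))
       + (\<Sum>i=1..r. int ((Suc k-i) choose (r-i)) * int ((x-i) choose (Suc k-i+1)))
       = int (k choose (r-1)) * int (x choose (k+1))"
proof -
  define g where "g i = (if i < r then int ((k-i) choose (r-1-i)) * int ((x-i) choose (k+1-i)) else 0)" for i
  have "(\<Sum>i=1..r. int ((k-i) choose (r-i)) * int ((x-i) choose (k-i+1))
       + int ((Suc k-i) choose (r-i)) * int ((x-i) choose (Suc k-i+1))) = g 0 - g r"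
  proof (rule tele)
    fix i assume i: "1 \<le> i" "i \<le> r"
    define p where "p = k - i"
    define y where "y = x - i"
    have e1: "k - (i-1) = Suc p" "Suc k - i = Suc p" "x - (i-1) = Suc y" "k-i+1 = Suc p" "Suc k - i + 1 = Suc (Suc p)"
      "k + 1 - (i-1) = Suc (Suc p)" "k+1-i = Suc p"
      using i assms unfolding p_def y_def by auto
    show "int ((k-i) choose (r-i)) * int ((x-i) choose (k-i+1))
       + int ((Suc k-i) choose (r-i)) * int ((x-i) choose (Suc k-i+1)) = g (i-1) - g i"
    proof (cases "i < r")
      case True
      define q where "q = r - 1 - i"
      have e2: "r - i = Suc q" "r - 1 - (i-1) = Suc q" using True i unfolding q_def by auto
      have "i - 1 < r" using i by auto
      then show ?thesis using True unfolding g_def e1 e2 p_def[symmetric] y_def[symmetric] q_def[symmetric]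
        by (simp add: algebra_simps)
    next
      case False
      then have "i = r" using i by auto
      then show ?thesis unfolding g_def using e1 i unfolding p_def[symmetric] y_def[symmetric]
        by simp
    qed
  qed
  moreover have "g 0 = int (k choose (r-1)) * int (x choose (k+1))" "g r = 0" using assms unfolding g_def by auto
  ultimately show ?thesis by (simp add: sum.distrib)
qed

lemma pw:
  fixes r k x :: nat assumes "1 \<le> r" "r \<le> k"
  shows "(if r \<le> x then 1 else 0::int) = (\<Sum>j=r..k. (-1)^(r+j) * int ((j-1) choose (r-1)) * int (x choose j))
     + (-1)^(r+k+1) * (\<Sum>i=1..r. int ((k-i) choose (r-i)) * int ((x-i) choose (k-i+1)))"
proof (cases "r \<le> x")
  case False
  have "(\<Sum>j=r..k. (-1)^(r+j) * int ((j-1) choose (r-1)) * int (x choose j)) = 0"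
    by (rule sum.neutral) (use False in auto)
  moreover have "(\<Sum>i=1..r. int ((k-i) choose (r-i)) * int ((x-i) choose (k-i+1))) = 0"
    by (rule sum.neutral) (use False assms in auto)
  ultimately show ?thesis using False by simp
next
  case True
  note rx = True
  show ?thesis using assms(2)
  proof (induction k rule: dec_induct)
    case base
    then show ?case using pw_base[OF assms(1) rx] rx by simp
  next
    case (step k)
    have st: "(\<Sum>i=1..r. int ((k-i) choose (r-i)) * int ((x-i) choose (k-i+1)))
       + (\<Sum>i=1..r. int ((Suc k-i) choose (r-i)) * int ((x-i) choose (Suc k-i+1)))
       = int (k choose (r-1)) * int (x choose (k+1))"
      using pw_step[OF assms(1) step(1) rx] .
    have "(\<Sum>j=r..Suc k. (-1)^(r+j) * int ((j-1) choose (r-1)) * int (x choose j))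
       = (\<Sum>j=r..k. (-1)^(r+j) * int ((j-1) choose (r-1)) * int (x choose j)) + (-1)^(r+k+1) * int (k choose (r-1)) * int (x choose (k+1))"
      using step(1) by simp
    moreover have "(-1::int)^(r+Suc k+1) = - ((-1)^(r+k+1))" by simp
    moreover have "Suc k - i + 1 = Suc (Suc k) - i" if "i \<le> r" for i using that step(1) by auto
    ultimately show ?case using step(3) rx
    proof -
      define Sk where "Sk = (\<Sum>j=r..k. (-1)^(r+j) * int ((j-1) choose (r-1)) * int (x choose j))"
      define Tk where "Tk = (\<Sum>i=1..r. int ((k-i) choose (r-i)) * int ((x-i) choose (k-i+1)))"
      define Tk1 where "Tk1 = (\<Sum>i=1..r. int ((Suc k-i) choose (r-i)) * int ((x-i) choose (Suc k-i+1)))"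
      define c where "c = int (k choose (r-1)) * int (x choose (k+1))"
      define s where "s = (-1::int)^(r+k+1)"
      have h1: "1 = Sk + s * Tk" using step(3) rx unfolding Sk_def Tk_def s_def by simp
      have h2: "Tk1 = c - Tk" using st unfolding Tk_def Tk1_def c_def by simp
      have h3: "(\<Sum>j=r..Suc k. (-1)^(r+j) * int ((j-1) choose (r-1)) * int (x choose j)) = Sk + s * c"
        using step(1) unfolding Sk_def s_def c_def by simp
      have hc: "c = Tk1 + Tk" using h2 by simp
      have "s * c = s * Tk1 + s * Tk" unfolding hc by (simp add: distrib_left)
      then have "1 = (Sk + s*c) + (-s) * Tk1" using h1 by simp
      then show ?thesis using h3 rx unfolding Tk1_def s_def by simp
    qed
  qed
qed


lemma ibinom_nat: "ibinom (int a) (int b) = int (a choose b)"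
  unfolding ibinom_def by auto

theorem theorem2:
  fixes M :: "'a measure" and A :: "nat \<Rightarrow> 'a set" and n r k :: nat
  assumes "prob_space M"
    and "\<And>i. i \<in> {1..n} \<Longrightarrow> A i \<in> sets M"
    and "1 \<le> r" and "r \<le> k"
  shows "measure M {w \<in> space M. count_events A n w \<ge> r} =
      (\<Sum>j=r..k. (-1) ^ (r + j) * real_of_int (ibinom (int j - 1) (int r - 1)) * S_sum M A n j)
      + (-1) ^ (r + k + 1) * (\<Sum>i=1..r. real_of_int (ibinom (int k - int i) (int r - int i)) *
          integral\<^sup>L M (\<lambda>w. real_of_int (ibinom (int (count_events A n w) - int i) (int k - int i + 1))))"
proof -
  interpret P: prob_space M by fact
  define X where "X = count_events A n"
  have Xle: "X w \<le> n" for w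
  proof -
    have "X w \<le> card {1..n}" unfolding X_def count_events_def by (rule card_mono) auto
    then show ?thesis by simp
  qed
  have Xsum: "X w = (\<Sum>i\<in>{1..n}. if w \<in> A i then 1 else 0)" for w
    unfolding X_def count_events_def by (simp add: sum.If_cases Int_def)
  have Xmeas: "X \<in> measurable M (count_space UNIV)"
  proof -
    have "(\<lambda>w. \<Sum>i\<in>{1..n}. if w \<in> A i then 1 else (0::nat)) \<in> measurable M (count_space UNIV)"
    proof (rule measurable_sum_nat)
      fix i assume "i \<in> {1..n}"
      then have "A i \<inter> space M \<in> sets M" using assms(2) by auto
      then show "(\<lambda>w. if w \<in> A i then 1 else (0::nat)) \<in> measurable M (count_space UNIV)"
        by (intro measurable_If_set) auto
    qed
    moreover have "X = (\<lambda>w. \<Sum>i\<in>{1..n}. if w \<in> A i then 1 else (0::nat))" using Xsum by auto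
    ultimately show ?thesis by simp
  qed
  have intg: "integrable M (\<lambda>w. h (X w))" for h :: "nat \<Rightarrow> real"
  proof (rule P.integrable_const_bound)
    show "AE x in M. norm (h (X x)) \<le> Max ((\<lambda>m. norm (h m)) ` {0..n})"
      using Xle by (intro AE_I2 Max_ge) auto
    show "(\<lambda>w. h (X w)) \<in> borel_measurable M"
      by (rule measurable_compose[OF Xmeas]) simp
  qed
  have S: "S_sum M A n j = integral\<^sup>L M (\<lambda>w. real (X w choose j))" if j: "1 \<le> j" for j
  proof -
    let ?J = "{I. I \<subseteq> {1..n} \<and> card I = j}"
    have fin: "finite ?J" by (rule finite_subset[of _ "Pow {1..n}"]) auto
    have mI: "(\<Inter>i\<in>I. A i) \<in> sets M" if "I \<in> ?J" for I
    proof -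
      have "I \<noteq> {}" "finite I" using that j finite_subset[of I "{1..n}"] by auto
      then show ?thesis using that assms(2) by (intro sets.finite_INT) auto
    qed
    have "S_sum M A n j = (\<Sum>I\<in>?J. integral\<^sup>L M (indicator (\<Inter>i\<in>I. A i)))"
      unfolding S_sum_def using mI sets.sets_into_space by (intro sum.cong refl) (simp add: Int_absorb2)
    also have "\<dots> = integral\<^sup>L M (\<lambda>w. \<Sum>I\<in>?J. indicator (\<Inter>i\<in>I. A i) w)"
      by (rule Bochner_Integration.integral_sum[where f="\<lambda>I w. indicator (\<Inter>i\<in>I. A i) w :: real", symmetric]) (use mI in \<open>auto intro!: integrable_real_indicator simp: P.emeasure_eq_measure\<close>)
    also have "\<dots> = integral\<^sup>L M (\<lambda>w. real (X w choose j))"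
    proof (rule Bochner_Integration.integral_cong[OF refl])
      fix w
      let ?Iw = "{i \<in> {1..n}. w \<in> A i}"
      have "(\<Sum>I\<in>?J. indicator (\<Inter>i\<in>I. A i) w :: real) = (\<Sum>I\<in>?J. if I \<subseteq> ?Iw then 1 else 0)"
        by (intro sum.cong refl) (auto simp: indicator_def)
      also have "\<dots> = real (card {I \<in> ?J. I \<subseteq> ?Iw})"
        using fin by (simp add: sum.If_cases Int_def)
      also have "{I \<in> ?J. I \<subseteq> ?Iw} = {I. I \<subseteq> ?Iw \<and> card I = j}" by auto
      also have "card \<dots> = card ?Iw choose j" by (rule n_subsets) auto
      finally show "(\<Sum>I\<in>?J. indicator (\<Inter>i\<in>I. A i) w :: real) = real (X w choose j)"
        unfolding X_def count_events_def by simp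
    qed
    finally show ?thesis .
  qed
  let ?c1 = "\<lambda>j. (-1::real) ^ (r + j) * real ((j-1) choose (r-1))"
  let ?c2 = "\<lambda>i. real ((k-i) choose (r-i))"
  let ?s = "(-1::real) ^ (r + k + 1)"
  have e1: "real_of_int (ibinom (int j - 1) (int r - 1)) = real ((j-1) choose (r-1))" if "j \<in> {r..k}" for j
  proof -
    have "int j - 1 = int (j-1)" "int r - 1 = int (r-1)" using that assms(3) by auto
    then show ?thesis by (metis ibinom_nat of_int_of_nat_eq)
  qed
  have e2: "real_of_int (ibinom (int k - int i) (int r - int i)) = real ((k-i) choose (r-i))" if "i \<in> {1..r}" for i
  proof -
    have "int k - int i = int (k-i)" "int r - int i = int (r-i)" using that assms(4) by auto
    then show ?thesis by (metis ibinom_nat of_int_of_nat_eq)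
  qed
  have e3: "real_of_int (ibinom (int x - int i) (int k - int i + 1)) = real ((x-i) choose (k-i+1))" if "i \<in> {1..r}" for i x
  proof (cases "i \<le> x")
    case True
    have "int x - int i = int (x-i)" "int k - int i + 1 = int (k-i+1)" using True that assms(4) by auto
    then show ?thesis by (metis ibinom_nat of_int_of_nat_eq)
  next
    case False
    then show ?thesis unfolding ibinom_def by auto
  qed
  have "measure M {w \<in> space M. count_events A n w \<ge> r} = integral\<^sup>L M (indicator {w \<in> space M. r \<le> X w})"
    unfolding X_def by (simp add: Int_absorb2)
  also have "\<dots> = integral\<^sup>L M (\<lambda>w. real_of_int (if r \<le> X w then 1 else 0))"
    by (rule Bochner_Integration.integral_cong) (auto simp: indicator_def)
  also have "\<dots> = integral\<^sup>L M (\<lambda>w. (\<Sum>j=r..k. ?c1 j * real (X w choose j))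
        + ?s * (\<Sum>i=1..r. ?c2 i * real ((X w - i) choose (k-i+1))))"
  proof (rule Bochner_Integration.integral_cong[OF refl])
    fix w
    have h: "(if r \<le> X w then 1 else 0::int) = (\<Sum>j=r..k. (-1)^(r+j) * int ((j-1) choose (r-1)) * int (X w choose j))
     + (-1)^(r+k+1) * (\<Sum>i=1..r. int ((k-i) choose (r-i)) * int ((X w-i) choose (k-i+1)))"
      by (rule pw[OF assms(3,4)])
    show "real_of_int (if r \<le> X w then 1 else 0) = (\<Sum>j=r..k. ?c1 j * real (X w choose j))
        + ?s * (\<Sum>i=1..r. ?c2 i * real ((X w - i) choose (k-i+1)))"
      unfolding h by (simp only: of_int_add of_int_mult of_int_sum of_int_power of_int_of_nat_eq of_int_minus of_int_1 mult.assoc)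
  qed
  also have "\<dots> = (\<Sum>j=r..k. ?c1 j * integral\<^sup>L M (\<lambda>w. real (X w choose j)))
        + ?s * (\<Sum>i=1..r. ?c2 i * integral\<^sup>L M (\<lambda>w. real ((X w - i) choose (k-i+1))))"
  proof -
    have i1: "integrable M (\<lambda>w. (\<Sum>j=r..k. ?c1 j * real (X w choose j)))"
      using intg[of "\<lambda>x. (\<Sum>j=r..k. ?c1 j * real (x choose j))"] by simp
    have i2: "integrable M (\<lambda>w. ?s * (\<Sum>i=1..r. ?c2 i * real ((X w - i) choose (k-i+1))))"
      using intg[of "\<lambda>x. ?s * (\<Sum>i=1..r. ?c2 i * real ((x - i) choose (k-i+1)))"] by simp
    have a: "integral\<^sup>L M (\<lambda>w. (\<Sum>j=r..k. ?c1 j * real (X w choose j))) = (\<Sum>j=r..k. ?c1 j * integral\<^sup>L M (\<lambda>w. real (X w choose j)))"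
      by (subst Bochner_Integration.integral_sum) (auto intro: intg)
    have b: "integral\<^sup>L M (\<lambda>w. ?s * (\<Sum>i=1..r. ?c2 i * real ((X w - i) choose (k-i+1)))) = ?s * (\<Sum>i=1..r. ?c2 i * integral\<^sup>L M (\<lambda>w. real ((X w - i) choose (k-i+1))))"
      by (subst integral_mult_right_zero, subst Bochner_Integration.integral_sum) (auto intro: intg)
    show ?thesis using i1 i2 a b by simp
  qed
  also have "\<dots> = (\<Sum>j=r..k. (-1) ^ (r + j) * real_of_int (ibinom (int j - 1) (int r - 1)) * S_sum M A n j)
      + (-1) ^ (r + k + 1) * (\<Sum>i=1..r. real_of_int (ibinom (int k - int i) (int r - int i)) *
          integral\<^sup>L M (\<lambda>w. real_of_int (ibinom (int (count_events A n w) - int i) (int k - int i + 1))))"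
  proof -
    have "(\<Sum>j=r..k. ?c1 j * integral\<^sup>L M (\<lambda>w. real (X w choose j))) = (\<Sum>j=r..k. (-1) ^ (r + j) * real_of_int (ibinom (int j - 1) (int r - 1)) * S_sum M A n j)"
    proof (rule sum.cong[OF refl])
      fix j assume j: "j \<in> {r..k}"
      then have "1 \<le> j" using assms(3) by auto
      then show "?c1 j * integral\<^sup>L M (\<lambda>w. real (X w choose j)) = (-1) ^ (r + j) * real_of_int (ibinom (int j - 1) (int r - 1)) * S_sum M A n j"
        using e1[OF j] S by simp
    qed
    moreover have "(\<Sum>i=1..r. ?c2 i * integral\<^sup>L M (\<lambda>w. real ((X w - i) choose (k-i+1)))) = (\<Sum>i=1..r. real_of_int (ibinom (int k - int i) (int r - int i)) *
          integral\<^sup>L M (\<lambda>w. real_of_int (ibinom (int (count_events A n w) - int i) (int k - int i + 1))))"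
    proof (rule sum.cong[OF refl])
      fix i assume i: "i \<in> {1..r}"
      show "?c2 i * integral\<^sup>L M (\<lambda>w. real ((X w - i) choose (k-i+1))) = real_of_int (ibinom (int k - int i) (int r - int i)) *
          integral\<^sup>L M (\<lambda>w. real_of_int (ibinom (int (count_events A n w) - int i) (int k - int i + 1)))"
        using e2[OF i] e3[OF i] unfolding X_def by simp
    qed
    ultimately show ?thesis by simp
  qed
  finally show ?thesis .
qed
end
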